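(* Let $G$ be a complete tiered graph on vertex set $[n]$. For each spanning tree $T$ of $G$ let $\mathrm{act}(T)$ be the set of externally active edges of $G$ with respect to $T$ (for the lexicographic order on edges) and let $T_{\mathrm{act}}$ be the edge set $E(T)\cup\mathrm{act}(T)$. Then the elements $$Z_{G\setminus T_{\mathrm{act}}}=\prod_{e\in E(G)\setminus T_{\mathrm{act}}} z_e,\qquad T\in ST(G),$$ span the space $\mathcal S_G$.
   Context: A complete tiered graph on $[n]$ with surjective tiering $\mathbf t:[n]\to[m]$ has edge set exactly $\{\{i,j\}: i<j,\ \mathbf t(i)<\mathbf t(j)\}$. An edge $e\notin T$ is externally active with respect to the spanning tree $T$ if it is the minimal edge (in the lexicographic order on edges, edges written as $(i,j)$ with $i<j$) of the unique cycle in $T\cup\{e\}$. A subset $H\subseteq E(G)$ is slim if the graph $(V(G),E(G)\setminus H)$ is connected. For an edge $e=\{i,j\}$ with $i<j$ set $z_e=z_i-z_j\in\mathbb K[z_1,\dots,z_n]$ ($\mathbb K$ a field of characteristic $0$), and for $H\subseteq E(G)$ set $Z_H=\prod_{e\in H}z_e$. $\mathcal S_G$ is the linear subspace of $\mathbb K[z_1,\dots,z_n]$ spanned by the $Z_H$ for all slim $H\subseteq E(G)$. *)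

theory Defs
  imports Main "HOL-Library.Poly_Mapping"
begin

text \<open>Edges of graphs on vertex set [n] = {1..n} are pairs (i,j) with i < j.\<close>

definition tiered_edges :: "nat \<Rightarrow> (nat \<Rightarrow> nat) \<Rightarrow> (nat \<times> nat) set" where
  "tiered_edges n t = {(i,j). i \<in> {1..n} \<and> j \<in> {1..n} \<and> i < j \<and> t i < t j}"

definition edge_rel :: "(nat \<times> nat) set \<Rightarrow> (nat \<times> nat) set" where
  "edge_rel F = F \<union> converse F"

definition connected_on :: "nat set \<Rightarrow> (nat \<times> nat) set \<Rightarrow> bool" where
  "connected_on V F \<longleftrightarrow> (\<forall>u\<in>V. \<forall>v\<in>V. (u, v) \<in> (edge_rel F)\<^sup>*)"

definition edge_verts :: "(nat \<times> nat) set \<Rightarrow> nat set" where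
  "edge_verts C = fst ` C \<union> snd ` C"

definition is_cycle :: "(nat \<times> nat) set \<Rightarrow> bool" where
  "is_cycle C \<longleftrightarrow> C \<noteq> {} \<and> finite C \<and> connected_on (edge_verts C) C \<and>
     (\<forall>v\<in>edge_verts C. card {e\<in>C. fst e = v \<or> snd e = v} = 2)"

definition acyclic_edges :: "(nat \<times> nat) set \<Rightarrow> bool" where
  "acyclic_edges F \<longleftrightarrow> (\<forall>C\<subseteq>F. \<not> is_cycle C)"

definition spanning_tree :: "nat set \<Rightarrow> (nat \<times> nat) set \<Rightarrow> (nat \<times> nat) set \<Rightarrow> bool" where
  "spanning_tree V E T \<longleftrightarrow> T \<subseteq> E \<and> connected_on V T \<and> acyclic_edges T"

definition lex_le :: "nat \<times> nat \<Rightarrow> nat \<times> nat \<Rightarrow> bool" where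
  "lex_le e f \<longleftrightarrow> fst e < fst f \<or> (fst e = fst f \<and> snd e \<le> snd f)"

definition ext_active :: "(nat \<times> nat) set \<Rightarrow> (nat \<times> nat) set \<Rightarrow> (nat \<times> nat) \<Rightarrow> bool" where
  "ext_active E T e \<longleftrightarrow> e \<in> E \<and> e \<notin> T \<and>
     (\<exists>C. C \<subseteq> T \<union> {e} \<and> is_cycle C \<and> e \<in> C \<and> (\<forall>f\<in>C. lex_le e f))"

definition act :: "(nat \<times> nat) set \<Rightarrow> (nat \<times> nat) set \<Rightarrow> (nat \<times> nat) set" where
  "act E T = {e. ext_active E T e}"

definition slim :: "nat set \<Rightarrow> (nat \<times> nat) set \<Rightarrow> (nat \<times> nat) set \<Rightarrow> bool" where
  "slim V E H \<longleftrightarrow> H \<subseteq> E \<and> connected_on V (E - H)"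

text \<open>Multivariate polynomials K[z_1,...] as finitely supported maps from monomials
  (finitely supported exponent vectors) to coefficients.\<close>
type_synonym 'a mpoly = "(nat \<Rightarrow>\<^sub>0 nat) \<Rightarrow>\<^sub>0 'a"

definition var :: "nat \<Rightarrow> 'a::comm_ring_1 mpoly" where
  "var i = Poly_Mapping.single (Poly_Mapping.single i 1) 1"

definition const :: "'a::comm_ring_1 \<Rightarrow> 'a mpoly" where
  "const c = Poly_Mapping.single 0 c"

definition z_edge :: "nat \<times> nat \<Rightarrow> 'a::comm_ring_1 mpoly" where
  "z_edge e = var (fst e) - var (snd e)"

definition Z :: "(nat \<times> nat) set \<Rightarrow> 'a::comm_ring_1 mpoly" where
  "Z H = (\<Prod>e\<in>H. z_edge e)"

definition lin_span :: "'a::comm_ring_1 mpoly set \<Rightarrow> 'a mpoly set" where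
  "lin_span A = {p. \<exists>S c. finite S \<and> S \<subseteq> A \<and> p = (\<Sum>a\<in>S. const (c a) * a)}"

definition S_G :: "nat set \<Rightarrow> (nat \<times> nat) set \<Rightarrow> 'a::comm_ring_1 mpoly set" where
  "S_G V E = lin_span {Z H | H. slim V E H}"

end

theory Submission
  imports Defs "HOL-Library.Transitive_Closure_Table" HOL.Modules
begin


lemma const_mult: "const (a*b) = const a * (const b :: 'a::comm_ring_1 mpoly)"
  unfolding const_def by (simp add: mult_single)

interpretation cm: module "\<lambda>c (p::'a::comm_ring_1 mpoly). const c * p"
  by standard (auto simp: const_def single_add distrib_left distrib_right mult_single mult.assoc[symmetric])

lemma lin_span_eq: "lin_span A = cm.span A"
  unfolding lin_span_def cm.span_explicit by auto

definition conn :: "(nat \<times> nat) set \<Rightarrow> nat \<Rightarrow> nat \<Rightarrow> bool" where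
  "conn F a b \<longleftrightarrow> (a,b) \<in> (edge_rel F)\<^sup>*"

lemma edge_rel_iff: "(u,w) \<in> edge_rel F \<longleftrightarrow> (u,w) \<in> F \<or> (w,u) \<in> F"
  unfolding edge_rel_def by auto

lemma conn_refl[simp]: "conn F a a" unfolding conn_def by auto

lemma conn_trans: "conn F a b \<Longrightarrow> conn F b c \<Longrightarrow> conn F a c"
  unfolding conn_def by (meson rtrancl_trans)

lemma conn_sym: "conn F a b \<Longrightarrow> conn F b a"
proof -
  assume "conn F a b"
  then have "(b,a) \<in> (converse (edge_rel F))\<^sup>*" unfolding conn_def by (simp add: rtrancl_converseI)
  moreover have "converse (edge_rel F) = edge_rel F" unfolding edge_rel_def by auto
  ultimately show ?thesis unfolding conn_def by simp
qed

lemma conn_edge: "(u,w) \<in> F \<Longrightarrow> conn F u w"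
  unfolding conn_def edge_rel_def by auto

lemma conn_edge': "(u,w) \<in> F \<Longrightarrow> conn F w u"
  by (meson conn_edge conn_sym)

lemma conn_mono: "F \<subseteq> G \<Longrightarrow> conn F a b \<Longrightarrow> conn G a b"
  unfolding conn_def edge_rel_def by (meson Un_mono converse_mono rtrancl_mono subsetD)

lemma conn_lift:
  assumes "\<And>f. f \<in> F \<Longrightarrow> conn G (fst f) (snd f)" and "conn F a b"
  shows "conn G a b"
proof -
  have "edge_rel F \<subseteq> (edge_rel G)\<^sup>*"
  proof
    fix p assume "p \<in> edge_rel F"
    then obtain u w where p: "p = (u,w)" and "(u,w) \<in> F \<or> (w,u) \<in> F"
      by (cases p) (auto simp: edge_rel_iff)
    then show "p \<in> (edge_rel G)\<^sup>*"
      using assms(1)[of "(u,w)"] assms(1)[of "(w,u)"] conn_sym unfolding conn_def by fastforce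
  qed
  then show ?thesis using assms(2) unfolding conn_def by (meson rtrancl_subset_rtrancl subsetD)
qed

lemma conn_path: "conn F a b \<longleftrightarrow> (\<exists>ys. rtrancl_path (\<lambda>u w. (u,w) \<in> edge_rel F) a ys b)"
  unfolding conn_def using rtranclp_eq_rtrancl_path[of "\<lambda>u w. (u,w) \<in> edge_rel F"]
  by (simp add: rtranclp_rtrancl_eq)

definition Sset :: "(nat \<times> nat) set \<Rightarrow> 'a::comm_ring_1 mpoly \<Rightarrow> (nat \<times> nat) set \<Rightarrow> 'a mpoly set" where
  "Sset F R P = {z_edge f * R | f. f \<in> F \<and> (\<exists>(u,w)\<in>P. f = (u,w) \<or> f = (w,u))}"

lemma telescope:
  assumes "rtrancl_path (\<lambda>u w. (u,w) \<in> edge_rel F) a ys b"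
  shows "(var a - var b) * R \<in> cm.span (Sset F R (set (zip (a#ys) ys)))"
  using assms
proof (induction rule: rtrancl_path.induct)
  case (base x)
  then show ?case by (simp add: cm.span_zero)
next
  case (step x y ys z)
  have sub: "Sset F R (set (zip (y#ys) ys)) \<subseteq> Sset F R (set (zip (x#y#ys) (y#ys)))"
    unfolding Sset_def by fastforce
  have A: "(var y - var z) * R \<in> cm.span (Sset F R (set (zip (x#y#ys) (y#ys))))"
    using step.IH cm.span_mono[OF sub] by blast
  have B: "(var x - var y) * R \<in> cm.span (Sset F R (set (zip (x#y#ys) (y#ys))))"
  proof (cases "(x,y) \<in> F")
    case True
    then have "z_edge (x,y) * R \<in> Sset F R (set (zip (x#y#ys) (y#ys)))"
      unfolding Sset_def by force
    then show ?thesis by (simp add: z_edge_def cm.span_base)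
  next
    case False
    then have "(y,x) \<in> F" using step.hyps(1) by (simp add: edge_rel_iff)
    then have "z_edge (y,x) * R \<in> Sset F R (set (zip (x#y#ys) (y#ys)))"
      unfolding Sset_def by force
    then have "- (z_edge (y,x) * R) \<in> cm.span (Sset F R (set (zip (x#y#ys) (y#ys))))"
      by (simp add: cm.span_neg cm.span_base)
    then show ?thesis by (simp add: z_edge_def algebra_simps)
  qed
  have "(var x - var z) * R = (var x - var y) * R + (var y - var z) * R"
    by (simp add: algebra_simps)
  then show ?case using A B cm.span_add by metis
qed

lemma path_avoid:
  assumes "rtrancl_path (\<lambda>u w. (u,w) \<in> edge_rel F) y ys b"
  shows "x \<notin> set (y#ys) \<Longrightarrow> x = fst f \<or> x = snd f \<Longrightarrow> conn (F - {f}) y b"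
  using assms
proof (induction rule: rtrancl_path.induct)
  case (base x)
  then show ?case by simp
next
  case (step u v ys z)
  have "(u,v) \<in> edge_rel (F - {f})"
    using step.hyps(1) step.prems by (cases f) (auto simp: edge_rel_iff)
  then have "conn (F - {f}) u v" unfolding conn_def by auto
  then show ?case using step by (meson conn_trans list.set_intros(2) set_ConsD)
qed

lemma path_split:
  assumes "rtrancl_path (\<lambda>u w. (u,w) \<in> edge_rel F) a ys b"
  shows "distinct (a#ys) \<Longrightarrow> (u,w) \<in> set (zip (a#ys) ys) \<Longrightarrow> f = (u,w) \<or> f = (w,u)
     \<Longrightarrow> conn (F-{f}) a u \<and> conn (F-{f}) w b"
  using assms
proof (induction arbitrary: u w rule: rtrancl_path.induct)
  case (base x)
  then show ?case by simp
next
  case (step x y ys z)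
  show ?case
  proof (cases "(u,w) = (x,y)")
    case True
    then have "conn (F - {f}) y z"
      using path_avoid[OF step.hyps(2), of x f] step.prems by auto
    then show ?thesis using True by simp
  next
    case False
    then have uw: "(u,w) \<in> set (zip (y#ys) ys)" using step.prems(2) by auto
    then have "u \<in> set (y#ys)" "w \<in> set (y#ys)"
      by (auto dest: set_zip_leftD set_zip_rightD)
    then have xn: "x \<noteq> u" "x \<noteq> w" using step.prems(1) by auto
    have IH: "conn (F-{f}) y u \<and> conn (F-{f}) w z"
      using step.IH[OF _ uw step.prems(3)] step.prems(1) by simp
    have "(x,y) \<in> edge_rel (F - {f})"
      using step.hyps(1) step.prems(3) xn by (auto simp: edge_rel_iff)
    then have "conn (F - {f}) x y" unfolding conn_def by auto
    then show ?thesis using IH conn_trans by blast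
  qed
qed



lemma cycle_edge_conn:
  assumes cyc: "is_cycle C" and eC: "e \<in> C" and pr: "\<forall>g\<in>C. fst g < snd g"
  shows "conn (C - {e}) (fst e) (snd e)"
proof (rule ccontr)
  assume nc: "\<not> ?thesis"
  define a where "a = fst e"
  define b where "b = snd e"
  define C' where "C' = C - {e}"
  define inc where "inc v g \<longleftrightarrow> fst g = v \<or> snd g = v" for v and g :: "nat \<times> nat"
  define K where "K = {v \<in> edge_verts C. conn C' a v}"
  have finC: "finite C" using cyc is_cycle_def by auto
  have finC': "finite C'" using finC C'_def by auto
  have finV: "finite (edge_verts C)" using finC edge_verts_def by auto
  have finK: "finite K" using finV K_def by auto
  have aK: "a \<in> K" using eC a_def unfolding K_def edge_verts_def by force
  have bK: "b \<notin> K" using nc unfolding K_def a_def b_def C'_def by auto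
  have deg2: "card {g\<in>C. inc v g} = 2" if "v \<in> edge_verts C" for v
    using cyc that unfolding is_cycle_def inc_def by auto
  have deg: "card {g\<in>C'. inc v g} = (if v = a then 1 else 2)" if "v \<in> K" for v
  proof -
    have 1: "{g\<in>C'. inc v g} = {g\<in>C. inc v g} - {e}" unfolding C'_def by auto
    have 2: "inc v e \<longleftrightarrow> v = a" using that bK a_def b_def inc_def by auto
    have 3: "v \<in> edge_verts C" using that K_def by auto
    show ?thesis
    proof (cases "v = a")
      case True
      then have "e \<in> {g\<in>C. inc v g}" using 2 eC by auto
      then show ?thesis using 1 deg2[OF 3] True by (simp add: card_Diff_singleton)
    next
      case False
      then have "{g\<in>C'. inc v g} = {g\<in>C. inc v g}" using 1 2 by auto
      then show ?thesis using deg2[OF 3] False by simp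
    qed
  qed
  have "(\<Sum>v\<in>K. card {g\<in>C'. inc v g}) = (\<Sum>v\<in>K. if v = a then 1 else 2)"
    using deg by (rule sum.cong[OF refl])
  also have "\<dots> = 1 + (\<Sum>v\<in>K-{a}. if v = a then 1 else 2)"
    using finK aK by (simp add: sum.remove)
  also have "(\<Sum>v\<in>K-{a}. if v = a then 1 else 2) = (\<Sum>v\<in>K-{a}. (2::nat))"
    by (rule sum.cong) auto
  finally have odd: "odd (\<Sum>v\<in>K. card {g\<in>C'. inc v g})" by simp
  have "(\<Sum>v\<in>K. card {g\<in>C'. inc v g}) = (\<Sum>v\<in>K. \<Sum>g\<in>C'. if inc v g then 1 else 0)"
    by (rule sum.cong[OF refl]) (simp add: sum.inter_filter[symmetric] finC')
  also have "\<dots> = (\<Sum>g\<in>C'. \<Sum>v\<in>K. if inc v g then 1 else 0)"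
    by (rule sum.swap)
  also have "\<dots> = (\<Sum>g\<in>C'. card {v\<in>K. inc v g})"
    by (rule sum.cong[OF refl]) (simp add: sum.inter_filter[symmetric] finK)
  finally have eq: "(\<Sum>v\<in>K. card {g\<in>C'. inc v g}) = (\<Sum>g\<in>C'. card {v\<in>K. inc v g})" .
  have ev: "even (card {v\<in>K. inc v g})" if gC: "g \<in> C'" for g
  proof (cases "fst g \<in> K \<or> snd g \<in> K")
    case True
    have gC2: "g \<in> C" using gC C'_def by auto
    have vs: "fst g \<in> edge_verts C" "snd g \<in> edge_verts C" using gC2 unfolding edge_verts_def by auto
    have c1: "conn C' (fst g) (snd g)" using gC conn_edge[of "fst g" "snd g" C'] by simp
    have "fst g \<in> K \<and> snd g \<in> K"
      using True vs c1 conn_sym conn_trans unfolding K_def by blast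
    then have "{v\<in>K. inc v g} = {fst g, snd g}" unfolding inc_def by auto
    moreover have "fst g \<noteq> snd g" using pr gC2 by fastforce
    ultimately show ?thesis by simp
  next
    case False
    then have "{v\<in>K. inc v g} = {}" unfolding inc_def by auto
    then show ?thesis by (metis card.empty even_zero)
  qed
  have "even (\<Sum>g\<in>C'. card {v\<in>K. inc v g})" by (rule dvd_sum) (use ev in auto)
  then show False using odd eq by simp
qed

lemma rtrancl_path_nth: "rtrancl_path r a ys b \<Longrightarrow> i < length ys \<Longrightarrow> r ((a#ys)!i) (ys!i)"
proof (induction arbitrary: i rule: rtrancl_path.induct)
  case (base x)
  then show ?case by simp
next
  case (step x y ys z)
  then show ?case by (cases i) auto
qed

lemma rtrancl_path_last: "rtrancl_path r a ys b \<Longrightarrow> (a#ys)!length ys = b"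
  by (induction rule: rtrancl_path.induct) auto



lemma path_cycle:
  assumes path: "rtrancl_path (\<lambda>u w. (u,w) \<in> edge_rel F) a ys b" and dist: "distinct (a#ys)"
   and ab: "a < b" and eF: "(a,b) \<notin> F" and pr: "\<forall>g\<in>F. fst g < snd g"
  shows "\<exists>C \<subseteq> insert (a,b) F. is_cycle C \<and> (a,b) \<in> C"
proof -
  define p where "p = a#ys"
  define k where "k = length ys"
  define f where "f i = (if (p!i, p!Suc i) \<in> F then (p!i, p!Suc i) else (p!Suc i, p!i))" for i
  define e where "e = (a,b)"
  define C where "C = insert e (f ` {..<k})"
  have pk: "p!k = b" using rtrancl_path_last[OF path] p_def k_def by simp
  have p0: "p!0 = a" by (simp add: p_def)
  have lp: "length p = Suc k" by (simp add: p_def k_def)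
  have dp: "distinct p" using dist p_def by simp
  have step: "(p!i, p!Suc i) \<in> edge_rel F" if "i<k" for i
    using rtrancl_path_nth[OF path, of i] that p_def k_def by simp
  have fF: "f i \<in> F" if "i<k" for i
    using step[OF that] unfolding f_def by (auto simp: edge_rel_iff)
  have fends: "fst (f i) = p!j \<or> snd (f i) = p!j \<longleftrightarrow> p!j = p!i \<or> p!j = p!Suc i" for i j
    by (auto simp: f_def)
  have inj: "p!i = p!j \<longleftrightarrow> i = j" if "i \<le> k" "j \<le> k" for i j
    using nth_eq_iff_index_eq[OF dp] that lp by simp
  have k0: "k \<noteq> 0" using pk p0 ab by (metis less_irrefl)
  have k1: "k \<noteq> 1"
  proof
    assume k: "k = 1"
    then have "f 0 \<in> F" using fF by simp
    moreover have "f 0 = (a,b) \<or> f 0 = (b,a)" using k pk p0 by (auto simp: f_def)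
    ultimately show False using eF pr ab by fastforce
  qed
  have eC: "e \<notin> f ` {..<k}" using fF eF e_def by auto
  have CsubF: "C \<subseteq> insert e F" using fF C_def by auto
  have inc_f: "(fst (f j) = p!i \<or> snd (f j) = p!i) \<longleftrightarrow> (i = j \<or> i = Suc j)" if "i \<le> k" "j < k" for i j
    using fends[of j i] inj[of i j] inj[of i "Suc j"] that by auto
  have inc_e: "(fst e = p!i \<or> snd e = p!i) \<longleftrightarrow> (i = 0 \<or> i = k)" if "i \<le> k" for i
    using inj[of i 0] inj[of i k] p0 pk that e_def by auto
  have ev: "\<exists>i\<le>k. v = p!i" if "v \<in> edge_verts C" for v
  proof -
    have "\<exists>i\<le>k. v = p!i" if "v = a \<or> v = b" using that p0 pk by auto
    moreover have "\<exists>i\<le>k. v = p!i" if "j < k" "v = fst (f j) \<or> v = snd (f j)" for j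
      using that by (auto simp: f_def split: if_splits intro: exI[of _ j] exI[of _ "Suc j"])
    ultimately show ?thesis using \<open>v \<in> edge_verts C\<close> unfolding edge_verts_def C_def e_def by auto
  qed
  have ca: "conn C a (p!i)" if "i \<le> k" for i
    using that
  proof (induction i)
    case 0
    then show ?case using p0 by simp
  next
    case (Suc i)
    have "f i \<in> C" using Suc.prems C_def by auto
    then have "conn C (p!i) (p!Suc i)"
      by (cases "(p!i, p!Suc i) \<in> F") (auto simp: f_def intro: conn_edge conn_edge')
    then show ?case using Suc conn_trans by auto
  qed
  have conn_on: "connected_on (edge_verts C) C"
    unfolding connected_on_def
  proof (intro ballI)
    fix u v assume "u \<in> edge_verts C" "v \<in> edge_verts C"
    then obtain i j where ij: "i \<le> k" "j \<le> k" "u = p!i" "v = p!j" using ev by meson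
    have "conn C a u" "conn C a v" using ca ij by auto
    then have "conn C u v" using conn_sym conn_trans by metis
    then show "(u, v) \<in> (edge_rel C)\<^sup>*" by (simp add: conn_def)
  qed
  have deg: "card {g\<in>C. fst g = v \<or> snd g = v} = 2" if "v \<in> edge_verts C" for v
  proof -
    obtain i where i: "i \<le> k" "v = p!i" using ev[OF \<open>v \<in> edge_verts C\<close>] by auto
    have S: "{g\<in>C. fst g = v \<or> snd g = v} = (if i = 0 \<or> i = k then {e} else {}) \<union> f ` {j. j<k \<and> (i = j \<or> i = Suc j)}"
    proof (rule set_eqI, rule iffI)
      fix g assume "g \<in> {g\<in>C. fst g = v \<or> snd g = v}"
      then have gC: "g \<in> C" and ig: "fst g = v \<or> snd g = v" by auto
      from gC have "g = e \<or> (\<exists>j<k. g = f j)" unfolding C_def by auto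
      then show "g \<in> (if i = 0 \<or> i = k then {e} else {}) \<union> f ` {j. j<k \<and> (i = j \<or> i = Suc j)}"
      proof
        assume "g = e" then show ?thesis using inc_e[OF i(1)] ig i(2) by auto
      next
        assume "\<exists>j<k. g = f j" then obtain j where "j<k" "g = f j" by auto
        then show ?thesis using inc_f[OF i(1), of j] ig i(2) by auto
      qed
    next
      fix g assume "g \<in> (if i = 0 \<or> i = k then {e} else {}) \<union> f ` {j. j<k \<and> (i = j \<or> i = Suc j)}"
      then have "(g = e \<and> (i = 0 \<or> i = k)) \<or> (\<exists>j<k. (i = j \<or> i = Suc j) \<and> g = f j)"
        by (auto split: if_splits)
      then show "g \<in> {g\<in>C. fst g = v \<or> snd g = v}"
      proof
        assume "g = e \<and> (i = 0 \<or> i = k)" then show ?thesis using inc_e[OF i(1)] i(2) C_def by auto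
      next
        assume "\<exists>j<k. (i = j \<or> i = Suc j) \<and> g = f j"
        then obtain j where "j<k" "i = j \<or> i = Suc j" "g = f j" by auto
        then show ?thesis using inc_f[OF i(1), of j] i(2) C_def by auto
      qed
    qed
    show ?thesis
    proof (cases "i = 0")
      case True
      then have "{j. j<k \<and> (i = j \<or> i = Suc j)} = {0}" using k0 by auto
      then have "{g\<in>C. fst g = v \<or> snd g = v} = {e, f 0}" using S True by auto
      moreover have "e \<noteq> f 0" using eC k0 by auto
      ultimately show ?thesis by simp
    next
      case False
      show ?thesis
      proof (cases "i = k")
        case True
        then have "{j. j<k \<and> (i = j \<or> i = Suc j)} = {k - 1}" using k0 by auto
        then have "{g\<in>C. fst g = v \<or> snd g = v} = {e, f (k-1)}" using S True by auto
        moreover have "e \<noteq> f (k-1)" using eC k0 by auto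
        ultimately show ?thesis by simp
      next
        case False2: False
        then have "{j. j<k \<and> (i = j \<or> i = Suc j)} = {i - 1, i}" using False i by auto
        then have "{g\<in>C. fst g = v \<or> snd g = v} = {f (i-1), f i}" using S False False2 by auto
        moreover have "f (i-1) \<noteq> f i"
        proof
          assume h: "f (i-1) = f i"
          have "fst (f (i-1)) = p!(i-1) \<or> snd (f (i-1)) = p!(i-1)"
            using inc_f[of "i-1" "i-1"] i False by auto
          then have "fst (f i) = p!(i-1) \<or> snd (f i) = p!(i-1)" using h by simp
          moreover have "(fst (f i) = p!(i-1) \<or> snd (f i) = p!(i-1)) \<longleftrightarrow> (i-1 = i \<or> i-1 = Suc i)"
            by (rule inc_f) (use i False False2 in auto)
          moreover have "\<not> (i-1 = i \<or> i-1 = Suc i)" using False by auto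
          ultimately show False by blast
        qed
        ultimately show ?thesis by simp
      qed
    qed
  qed
  have "is_cycle C"
    unfolding is_cycle_def using conn_on deg C_def by auto
  moreover have "C \<subseteq> insert (a,b) F" using CsubF e_def by simp
  moreover have "(a,b) \<in> C" using C_def e_def by simp
  ultimately show ?thesis by blast
qed



definition rk :: "nat \<Rightarrow> nat \<times> nat \<Rightarrow> nat" where
  "rk n e = fst e * (n+1) + snd e"

definition Gt :: "nat \<times> nat \<Rightarrow> (nat \<times> nat) set" where
  "Gt e = {f. lex_le e f \<and> f \<noteq> e}"

definition Ge :: "nat \<times> nat \<Rightarrow> (nat \<times> nat) set" where
  "Ge e = {f. lex_le e f}"

lemma lex_refl: "lex_le e e" by (simp add: lex_le_def)
lemma lex_total: "lex_le e f \<or> lex_le f e" by (auto simp: lex_le_def)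
lemma lex_antisym: "lex_le e f \<Longrightarrow> lex_le f e \<Longrightarrow> e = f"
  by (cases e; cases f) (auto simp: lex_le_def)
lemma lex_trans: "lex_le e f \<Longrightarrow> lex_le f g \<Longrightarrow> lex_le e g"
  by (auto simp: lex_le_def)

lemma rk_less:
  assumes "lex_le e f" "e \<noteq> f" "snd e \<le> n" "snd f \<le> n"
  shows "rk n e < rk n f"
proof (cases "fst e < fst f")
  case True
  have "rk n e \<le> fst e * (n+1) + n" using assms(3) by (simp add: rk_def)
  also have "\<dots> < (fst e + 1) * (n+1)" by simp
  also have "\<dots> \<le> fst f * (n+1)" using True by (intro mult_le_mono1) simp
  also have "\<dots> \<le> rk n f" by (simp add: rk_def)
  finally show ?thesis .
next
  case False
  then have "fst e = fst f" "snd e < snd f" using assms(1,2)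
    by (cases e; cases f; auto simp: lex_le_def)+
  then show ?thesis by (simp add: rk_def)
qed

lemma connected_on_conn: "connected_on V F \<longleftrightarrow> (\<forall>u\<in>V. \<forall>v\<in>V. conn F u v)"
  unfolding connected_on_def conn_def by simp

lemma Z_insert: "finite H \<Longrightarrow> f \<notin> H \<Longrightarrow> Z (insert f H) = z_edge f * Z H"
  unfolding Z_def by simp

lemma main_ind:
  assumes PE: "\<forall>g\<in>E. fst g < snd g \<and> snd g \<le> n" and finE: "finite E"
  shows "Y \<subseteq> E \<Longrightarrow> connected_on V Y \<Longrightarrow>
    Z (E - Y) \<in> (cm.span {Z (E - (T \<union> act E T)) | T. spanning_tree V E T} :: 'a::comm_ring_1 mpoly set)"
proof (induction "sum (rk n) Y" arbitrary: Y rule: less_induct)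
  case less
  define B :: "'a mpoly set" where "B = {Z (E - (T \<union> act E T)) | T. spanning_tree V E T}"
  have finY: "finite Y" using less.prems finE finite_subset by blast
  have Yc: "\<And>u v. u \<in> V \<Longrightarrow> v \<in> V \<Longrightarrow> conn Y u v" using less.prems connected_on_conn by blast
  show ?case
  proof (cases "\<exists>e0. e0 \<in> E \<and> e0 \<notin> Y \<and> conn (Y \<inter> Gt e0) (fst e0) (snd e0)")
    case True
    then obtain e0 where e0: "e0 \<in> E" "e0 \<notin> Y" "conn (Y \<inter> Gt e0) (fst e0) (snd e0)" by blast
    define F where "F = Y \<inter> Gt e0"
    define a where "a = fst e0"
    define b where "b = snd e0"
    define H where "H = E - Y"
    define R :: "'a mpoly" where "R = Z (H - {e0})"
    have finH: "finite H" using finE H_def by simp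
    obtain ys0 where "rtrancl_path (\<lambda>u w. (u,w) \<in> edge_rel F) a ys0 b"
      using e0(3) conn_path F_def a_def b_def by blast
    then obtain ys where path: "rtrancl_path (\<lambda>u w. (u,w) \<in> edge_rel F) a ys b"
      and dist: "distinct (a#ys)"
      by (rule rtrancl_path_distinct)
    have ZH: "Z (E - Y) = (var a - var b) * R"
    proof -
      have "E - Y = insert e0 (H - {e0})" using e0 H_def by auto
      then show ?thesis using Z_insert[of "H - {e0}" e0] finH
        by (simp add: R_def z_edge_def a_def b_def)
    qed
    have tel: "(var a - var b) * R \<in> cm.span (Sset F R (set (zip (a#ys) ys)))"
      by (rule telescope[OF path])
    have sub: "Sset F R (set (zip (a#ys) ys)) \<subseteq> cm.span B"
    proof
      fix x assume "x \<in> Sset F R (set (zip (a#ys) ys))"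
      then obtain f u w where x: "x = z_edge f * R" and fF: "f \<in> F"
        and uw: "(u,w) \<in> set (zip (a#ys) ys)" and fo: "f = (u,w) \<or> f = (w,u)"
        unfolding Sset_def by blast
      have cs: "conn (F-{f}) a u" "conn (F-{f}) w b"
        using path_split[OF path dist uw fo] by auto
      define Y' where "Y' = insert e0 (Y - {f})"
      have fY: "f \<in> Y" "f \<in> Gt e0" using fF F_def by auto
      have fE: "f \<in> E" using fY less.prems by auto
      have FY': "F - {f} \<subseteq> Y'" using F_def Y'_def by auto
      have Y'E: "Y' \<subseteq> E" using Y'_def e0 less.prems by auto
      have cuw: "conn Y' u w"
      proof -
        have "conn Y' u a" using conn_mono[OF FY' cs(1)] conn_sym by blast
        moreover have "conn Y' a b" using conn_edge[of a b Y'] Y'_def a_def b_def by simp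
        moreover have "conn Y' b w" using conn_mono[OF FY' cs(2)] conn_sym by blast
        ultimately show ?thesis using conn_trans by blast
      qed
      have Y'c: "connected_on V Y'"
        unfolding connected_on_conn
      proof (intro ballI)
        fix p q assume "p \<in> V" "q \<in> V"
        then have "conn Y p q" using Yc by blast
        then show "conn Y' p q"
        proof (rule conn_lift[rotated])
          fix g assume gY: "g \<in> Y"
          show "conn Y' (fst g) (snd g)"
          proof (cases "g = f")
            case True
            then show ?thesis using fo cuw conn_sym by auto
          next
            case False
            then have "g \<in> Y'" using gY Y'_def by auto
            then show ?thesis using conn_edge[of "fst g" "snd g" Y'] by simp
          qed
        qed
      qed
      have lt: "rk n e0 < rk n f" using rk_less[of e0 f n] fY PE e0(1) fE unfolding Gt_def by auto
      have "sum (rk n) Y' = sum (rk n) (Y - {f}) + rk n e0"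
        using finY e0(2) Y'_def by simp
      moreover have "sum (rk n) Y = sum (rk n) (Y - {f}) + rk n f"
        using finY fY(1) by (simp add: sum.remove)
      ultimately have pot: "sum (rk n) Y' < sum (rk n) Y" using lt by simp
      have IH: "Z (E - Y') \<in> cm.span B"
        using less.hyps[OF pot Y'E Y'c] B_def by simp
      have "E - Y' = insert f (H - {e0})" using Y'_def H_def fE fY e0 by auto
      moreover have "f \<notin> H - {e0}" using H_def fY by auto
      ultimately have "Z (E - Y') = z_edge f * R"
        using Z_insert[of "H - {e0}" f] finH R_def by simp
      then show "x \<in> cm.span B" using IH x by simp
    qed
    have "cm.span (Sset F R (set (zip (a#ys) ys))) \<subseteq> cm.span B"
      using cm.span_minimal[OF sub cm.subspace_span] .
    then show ?thesis using tel ZH B_def by auto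
  next
    case False
    then have noe: "\<And>e0. e0 \<in> E \<Longrightarrow> e0 \<notin> Y \<Longrightarrow> \<not> conn (Y \<inter> Gt e0) (fst e0) (snd e0)" by blast
    define T where "T = {e \<in> Y. \<not> conn (Y \<inter> Gt e) (fst e) (snd e)}"
    have TY: "T \<subseteq> Y" using T_def by auto
    have claim: "g \<in> Y \<Longrightarrow> conn (T \<inter> Ge g) (fst g) (snd g)" for g
    proof (induction g rule: measure_induct_rule[of "\<lambda>g. card {h\<in>Y. h \<in> Gt g}"])
      case (less g)
      show ?case
      proof (cases "g \<in> T")
        case True
        then have "g \<in> T \<inter> Ge g" using lex_refl Ge_def by auto
        then show ?thesis using conn_edge[of "fst g" "snd g"] by simp
      next
        case False
        then have c: "conn (Y \<inter> Gt g) (fst g) (snd g)" using T_def less.prems by auto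
        show ?thesis
        proof (rule conn_lift[OF _ c])
          fix f assume f: "f \<in> Y \<inter> Gt g"
          have "{h\<in>Y. h \<in> Gt f} \<subset> {h\<in>Y. h \<in> Gt g}"
          proof
            show "{h\<in>Y. h \<in> Gt f} \<subseteq> {h\<in>Y. h \<in> Gt g}"
              using f unfolding Gt_def by (auto intro: lex_trans dest: lex_antisym)
            show "{h\<in>Y. h \<in> Gt f} \<noteq> {h\<in>Y. h \<in> Gt g}" using f unfolding Gt_def by auto
          qed
          then have "card {h\<in>Y. h \<in> Gt f} < card {h\<in>Y. h \<in> Gt g}"
            using finY by (simp add: psubset_card_mono)
          then have "conn (T \<inter> Ge f) (fst f) (snd f)" using less.IH f by blast
          moreover have "T \<inter> Ge f \<subseteq> T \<inter> Ge g" using f unfolding Ge_def Gt_def by (auto intro: lex_trans)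
          ultimately show "conn (T \<inter> Ge g) (fst f) (snd f)" using conn_mono by blast
        qed
      qed
    qed
    have TE: "T \<subseteq> E" using TY less.prems by auto
    have Tc: "connected_on V T"
      unfolding connected_on_conn
    proof (intro ballI)
      fix p q assume "p \<in> V" "q \<in> V"
      then have "conn Y p q" using Yc by blast
      then show "conn T p q"
        by (rule conn_lift[rotated]) (meson claim conn_mono inf_le1)
    qed
    have Tacyc: "acyclic_edges T"
      unfolding acyclic_edges_def
    proof (intro allI impI notI)
      fix C assume CT: "C \<subseteq> T" and cyc: "is_cycle C"
      have finC: "finite C" "C \<noteq> {}" using cyc is_cycle_def by auto
      have "Min (rk n ` C) \<in> rk n ` C" using finC by (intro Min_in) auto
      then obtain e where eC: "e \<in> C" and emin: "rk n e = Min (rk n ` C)"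
        by (metis imageE)
      have lemin: "lex_le e f" if "f \<in> C" for f
      proof (rule ccontr)
        assume "\<not> lex_le e f"
        then have "lex_le f e" "f \<noteq> e" using lex_total lex_refl by metis+
        then have "rk n f < rk n e" using rk_less[of f e n] PE CT TE that eC by blast
        moreover have "rk n e \<le> rk n f" using emin finC that by simp
        ultimately show False by simp
      qed
      have "conn (C - {e}) (fst e) (snd e)"
        using cycle_edge_conn[OF cyc eC] PE CT TE by blast
      moreover have "C - {e} \<subseteq> Y \<inter> Gt e" using CT TY lemin Gt_def by auto
      ultimately have "conn (Y \<inter> Gt e) (fst e) (snd e)" using conn_mono by blast
      then show False using eC CT T_def by auto
    qed
    have st: "spanning_tree V E T" unfolding spanning_tree_def using TE Tc Tacyc by simp
    have actY: "act E T \<subseteq> Y"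
    proof
      fix e assume "e \<in> act E T"
      then obtain C where e: "e \<in> E" "e \<notin> T" and CTe: "C \<subseteq> T \<union> {e}" and cyc: "is_cycle C"
        and eC: "e \<in> C" and lmin: "\<forall>f\<in>C. lex_le e f"
        unfolding act_def ext_active_def by blast
      show "e \<in> Y"
      proof (rule ccontr)
        assume eY: "e \<notin> Y"
        have "conn (C - {e}) (fst e) (snd e)"
          using cycle_edge_conn[OF cyc eC] PE CTe TE e(1) by blast
        moreover have "C - {e} \<subseteq> Y \<inter> Gt e" using CTe TY lmin Gt_def by auto
        ultimately have "conn (Y \<inter> Gt e) (fst e) (snd e)" using conn_mono by blast
        then show False using noe e(1) eY by blast
      qed
    qed
    have Yact: "Y - T \<subseteq> act E T"
    proof
      fix e assume eYT: "e \<in> Y - T"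
      then have eE: "e \<in> E" using less.prems by auto
      have c: "conn (Y \<inter> Gt e) (fst e) (snd e)" using eYT T_def by auto
      have c2: "conn (T \<inter> Gt e) (fst e) (snd e)"
      proof (rule conn_lift[OF _ c])
        fix f assume f: "f \<in> Y \<inter> Gt e"
        then have "conn (T \<inter> Ge f) (fst f) (snd f)" using claim by blast
        moreover have "T \<inter> Ge f \<subseteq> T \<inter> Gt e" using f unfolding Ge_def Gt_def
          by (auto intro: lex_trans dest: lex_antisym)
        ultimately show "conn (T \<inter> Gt e) (fst f) (snd f)" using conn_mono by blast
      qed
      obtain ys0 where "rtrancl_path (\<lambda>u w. (u,w) \<in> edge_rel (T \<inter> Gt e)) (fst e) ys0 (snd e)"
        using c2 conn_path by blast
      then obtain ys where path: "rtrancl_path (\<lambda>u w. (u,w) \<in> edge_rel (T \<inter> Gt e)) (fst e) ys (snd e)"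
        and dist: "distinct (fst e # ys)"
        by (rule rtrancl_path_distinct)
      have "\<exists>C \<subseteq> insert (fst e, snd e) (T \<inter> Gt e). is_cycle C \<and> (fst e, snd e) \<in> C"
        by (rule path_cycle[OF path dist]) (use PE eE eYT TE in auto)
      then obtain C where C: "C \<subseteq> insert e (T \<inter> Gt e)" "is_cycle C" "e \<in> C" by auto
      have "C \<subseteq> T \<union> {e}" using C by auto
      moreover have "\<forall>f\<in>C. lex_le e f" using C lex_refl Gt_def by auto
      ultimately show "e \<in> act E T"
        unfolding act_def ext_active_def using eE eYT C by blast
    qed
    have "T \<union> act E T = Y" using TY actY Yact by auto
    then have "Z (E - Y) \<in> B" using st B_def by auto
    then show ?thesis unfolding B_def by (rule cm.span_base)
  qed
qed


theorem mainTheorem3: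
  fixes n m :: nat and t :: "nat \<Rightarrow> nat"
  assumes "t ` {1..n} = {1..m}"
  defines "E \<equiv> tiered_edges n t"
  shows "lin_span {Z (E - (T \<union> act E T)) | T. spanning_tree {1..n} E T}
           = (S_G {1..n} E :: 'a::field_char_0 mpoly set)"
proof -
  have PE: "\<forall>g\<in>E. fst g < snd g \<and> snd g \<le> n" unfolding E_def tiered_edges_def by auto
  have "E \<subseteq> {1..n} \<times> {1..n}" unfolding E_def tiered_edges_def by auto
  then have finE: "finite E" using finite_subset by blast
  define B :: "'a mpoly set" where "B = {Z (E - (T \<union> act E T)) | T. spanning_tree {1..n} E T}"
  have 1: "B \<subseteq> {Z H | H. slim {1..n} E H}"
  proof
    fix x assume "x \<in> B"
    then obtain T where x: "x = Z (E - (T \<union> act E T))" and st: "spanning_tree {1..n} E T"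
      unfolding B_def by blast
    have TE: "T \<subseteq> E" and Tc: "connected_on {1..n} T" using st spanning_tree_def by auto
    have "T \<subseteq> E - (E - (T \<union> act E T))" using TE by auto
    then have "connected_on {1..n} (E - (E - (T \<union> act E T)))"
      using Tc conn_mono unfolding connected_on_conn by blast
    then have "slim {1..n} E (E - (T \<union> act E T))" unfolding slim_def by auto
    then show "x \<in> {Z H | H. slim {1..n} E H}" using x by blast
  qed
  have 2: "{Z H | H. slim {1..n} E H} \<subseteq> cm.span B"
  proof
    fix x assume "x \<in> ({Z H | H. slim {1..n} E H} :: 'a mpoly set)"
    then obtain H where x: "x = Z H" and sl: "slim {1..n} E H" by blast
    have HE: "H \<subseteq> E" and c: "connected_on {1..n} (E - H)" using sl slim_def by auto
    have "Z (E - (E - H)) \<in> (cm.span B :: 'a mpoly set)"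
      unfolding B_def by (rule main_ind[OF PE finE]) (use c in auto)
    moreover have "E - (E - H) = H" using HE by auto
    ultimately show "x \<in> cm.span B" using x by simp
  qed
  have "cm.span B = cm.span {Z H | H. slim {1..n} E H}"
  proof
    show "cm.span B \<subseteq> cm.span {Z H | H. slim {1..n} E H}" using 1 by (rule cm.span_mono)
    show "cm.span {Z H | H. slim {1..n} E H} \<subseteq> cm.span B"
      using cm.span_minimal[OF 2 cm.subspace_span] .
  qed
  then show ?thesis unfolding lin_span_eq S_G_def B_def .
qed

end
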